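(* Let $B$, $\mathcal{U}=\{U_j\}_{j=1}^n$, $\{\varphi_j\}$, $q$, $\eta\in Z^1(\mathcal{N}(\mathcal{U});\mathbb{Z}_q)$ and $P_\eta$ be as below. Define $f:B\to L^n_q$ by \[ f(b)=\left[\sqrt{\varphi_1(b)}\,\zeta_q^{\eta_{j1}}:\cdots:\sqrt{\varphi_n(b)}\,\zeta_q^{\eta_{jn}}\right]\qquad\text{for } b\in U_j, \] with the convention that the $k$-th entry is $0$ if $U_j\cap U_k=\emptyset$. Then $f$ is well defined (independent of the choice of $j$ with $b\in U_j$), continuous, and classifies $P_\eta$: the principal $\mathbb{Z}_q$-bundle $P_\eta\to B$ is isomorphic to the pullback bundle $f^*(S^{2n-1})=\{(b,z)\in B\times S^{2n-1}: f(b)=p(z)\}\to B$, where $p:S^{2n-1}\to L^n_q$ is the quotient map. In particular, composing with the inclusion $L^n_q\subset L^\infty_q$, $f$ is a classifying map for $P_\eta$.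
   Context: $\zeta_q=e^{2\pi i/q}$. $\mathbb{Z}_q$ acts on $S^{2n-1}\subset\mathbb{C}^n$ by $z\cdot g=\zeta_q^g z$; the Lens space is $L^n_q=S^{2n-1}/\mathbb{Z}_q$ with quotient map $p$, and $[a_1:\cdots:a_n]$ denotes the class of $(a_1,\ldots,a_n)\in S^{2n-1}$ in $L^n_q$. $L^\infty_q=S^\infty/\mathbb{Z}_q$ similarly. $B$ is a topological space, $\mathcal{U}$ an open cover of $B$, $\{\varphi_j\}$ a partition of unity dominated by $\mathcal{U}$ (continuous $\varphi_j:B\to[0,1]$, $\sum_j\varphi_j\equiv1$, $\varphi_j=0$ outside $U_j$). The nerve $\mathcal{N}(\mathcal{U})$ has vertices $\{1,\ldots,n\}$ and simplices the index sets with nonempty common intersection. $\eta\in Z^1(\mathcal{N}(\mathcal{U});\mathbb{Z}_q)$ assigns $\eta_{jk}\in\mathbb{Z}_q$ to each ordered pair with $U_j\cap U_k\ne\emptyset$, with $\eta_{jj}=0$, $\eta_{kj}=-\eta_{jk}$, $\eta_{jk}+\eta_{kl}=\eta_{jl}$ whenever $U_j\cap U_k\cap U_l\ne\emptyset$. $P_\eta$ is the quotient of $\bigsqcup_j U_j\times\{j\}\times\mathbb{Z}_q$ by $(b,j,g)\sim(b,k,g+\eta_{jk})$ for $b\in U_j\cap U_k$, with projection $[b,j,g]\mapsto b$ and right action $[b,j,g]\cdot m=[b,j,g+m]$. Two principal $\mathbb{Z}_q$-bundles over $B$ are isomorphic if there is a $\mathbb{Z}_q$-equivariant homeomorphism of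 total spaces commuting with the projections. *)

theory Defs
  imports "HOL-Analysis.Analysis"
begin

definition qclass :: "'a topology \<Rightarrow> ('a \<Rightarrow> 'a \<Rightarrow> bool) \<Rightarrow> 'a \<Rightarrow> 'a set" where
  "qclass X r x = {y \<in> topspace X. r x y}"

definition qclasses :: "'a topology \<Rightarrow> ('a \<Rightarrow> 'a \<Rightarrow> bool) \<Rightarrow> 'a set set" where
  "qclasses X r = qclass X r ` topspace X"

definition quotient_top :: "'a topology \<Rightarrow> ('a \<Rightarrow> 'a \<Rightarrow> bool) \<Rightarrow> 'a set topology" where
  "quotient_top X r = topology (\<lambda>V. V \<subseteq> qclasses X r \<and> openin X (\<Union>V))"

definition zeta :: "nat \<Rightarrow> complex" where
  "zeta q = exp (2 * of_real pi * \<i> / of_nat q)"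

text \<open>Z_q is modelled as {0..<q} with addition mod q.\<close>

text \<open>The unit sphere S^(2n-1) in C^n, n = CARD('n).\<close>
definition sphere_top :: "(complex ^ 'n) topology" where
  "sphere_top = top_of_set (sphere 0 1)"

definition zact :: "nat \<Rightarrow> complex ^ 'n \<Rightarrow> nat \<Rightarrow> complex ^ 'n" where
  "zact q z g = (zeta q ^ g) *s z"

definition lens_rel :: "nat \<Rightarrow> complex ^ 'n \<Rightarrow> complex ^ 'n \<Rightarrow> bool" where
  "lens_rel q z w \<longleftrightarrow> (\<exists>g<q. w = zact q z g)"

definition lens_space :: "nat \<Rightarrow> (complex ^ 'n) set topology" where
  "lens_space q = quotient_top sphere_top (lens_rel q)"

definition lens_proj :: "nat \<Rightarrow> complex ^ 'n \<Rightarrow> (complex ^ 'n) set" where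
  "lens_proj q z = qclass sphere_top (lens_rel q) z"

text \<open>U is an open cover of B indexed by the finite type 'n (vertices of the nerve),
  phi a partition of unity dominated by U.\<close>
definition open_cover :: "'a topology \<Rightarrow> ('n \<Rightarrow> 'a set) \<Rightarrow> bool" where
  "open_cover B U \<longleftrightarrow> (\<forall>j. openin B (U j)) \<and> (\<Union>j. U j) = topspace B"

definition pou_dominated :: "'a topology \<Rightarrow> ('n::finite \<Rightarrow> 'a set) \<Rightarrow> ('n \<Rightarrow> 'a \<Rightarrow> real) \<Rightarrow> bool" where
  "pou_dominated B U \<phi> \<longleftrightarrow>
     (\<forall>j. continuous_map B euclideanreal (\<phi> j)) \<and>
     (\<forall>j. \<forall>b\<in>topspace B. 0 \<le> \<phi> j b \<and> \<phi> j b \<le> 1) \<and>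
     (\<forall>b\<in>topspace B. (\<Sum>j\<in>UNIV. \<phi> j b) = 1) \<and>
     (\<forall>j. \<forall>b\<in>topspace B - U j. \<phi> j b = 0)"

text \<open>A Z_q-valued 1-cocycle on the nerve of U (values in {0..<q}, defined on
  ordered pairs j,k with U j \<inter> U k nonempty; values elsewhere are irrelevant).\<close>
definition cocycle :: "nat \<Rightarrow> ('n \<Rightarrow> 'a set) \<Rightarrow> ('n \<Rightarrow> 'n \<Rightarrow> nat) \<Rightarrow> bool" where
  "cocycle q U \<eta> \<longleftrightarrow>
     (\<forall>j k. U j \<inter> U k \<noteq> {} \<longrightarrow> \<eta> j k < q) \<and>
     (\<forall>j. U j \<noteq> {} \<longrightarrow> \<eta> j j = 0) \<and>
     (\<forall>j k. U j \<inter> U k \<noteq> {} \<longrightarrow> \<eta> k j = (q - \<eta> j k) mod q) \<and>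
     (\<forall>j k l. U j \<inter> U k \<inter> U l \<noteq> {} \<longrightarrow> (\<eta> j k + \<eta> k l) mod q = \<eta> j l)"

text \<open>Disjoint union of U_j \<times> {j} \<times> Z_q, as a subspace of B \<times> 'n \<times> Z_q
  (discrete topology on the last two factors); since each U_j is open this is
  the disjoint union topology.\<close>
definition P_pre :: "'a topology \<Rightarrow> ('n \<Rightarrow> 'a set) \<Rightarrow> nat \<Rightarrow> ('a \<times> 'n \<times> nat) topology" where
  "P_pre B U q = subtopology (prod_topology B (prod_topology (discrete_topology UNIV) (discrete_topology UNIV)))
      {(b, j, g). b \<in> U j \<and> g < q}"

definition P_gen :: "('n \<Rightarrow> 'a set) \<Rightarrow> nat \<Rightarrow> ('n \<Rightarrow> 'n \<Rightarrow> nat)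
      \<Rightarrow> ('a \<times> 'n \<times> nat) \<Rightarrow> ('a \<times> 'n \<times> nat) \<Rightarrow> bool" where
  "P_gen U q \<eta> x y \<longleftrightarrow> (\<exists>b j k g. x = (b, j, g) \<and> y = (b, k, (g + \<eta> j k) mod q)
      \<and> b \<in> U j \<inter> U k \<and> g < q)"

definition P_space :: "'a topology \<Rightarrow> ('n \<Rightarrow> 'a set) \<Rightarrow> nat \<Rightarrow> ('n \<Rightarrow> 'n \<Rightarrow> nat)
      \<Rightarrow> ('a \<times> 'n \<times> nat) set topology" where
  "P_space B U q \<eta> = quotient_top (P_pre B U q) (equivclp (P_gen U q \<eta>))"

definition P_proj :: "('a \<times> 'n \<times> nat) set \<Rightarrow> 'a" where
  "P_proj c = (SOME b. \<exists>j g. (b, j, g) \<in> c)"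

definition P_act :: "nat \<Rightarrow> ('a \<times> 'n \<times> nat) set \<Rightarrow> nat \<Rightarrow> ('a \<times> 'n \<times> nat) set" where
  "P_act q c m = (\<lambda>(b, j, g). (b, j, (g + m) mod q)) ` c"

definition f_vec :: "nat \<Rightarrow> ('n \<Rightarrow> 'a set) \<Rightarrow> ('n \<Rightarrow> 'a \<Rightarrow> real) \<Rightarrow> ('n \<Rightarrow> 'n \<Rightarrow> nat)
      \<Rightarrow> 'n \<Rightarrow> 'a \<Rightarrow> complex ^ 'n" where
  "f_vec q U \<phi> \<eta> j b = (\<chi> k. if U j \<inter> U k = {} then 0
        else complex_of_real (sqrt (\<phi> k b)) * zeta q ^ (\<eta> j k))"

definition class_map :: "nat \<Rightarrow> ('n \<Rightarrow> 'a set) \<Rightarrow> ('n \<Rightarrow> 'a \<Rightarrow> real) \<Rightarrow> ('n \<Rightarrow> 'n \<Rightarrow> nat)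
      \<Rightarrow> 'a \<Rightarrow> (complex ^ 'n) set" where
  "class_map q U \<phi> \<eta> b = lens_proj q (f_vec q U \<phi> \<eta> (SOME j. b \<in> U j) b)"

definition pullback_space :: "'a topology \<Rightarrow> nat \<Rightarrow> ('a \<Rightarrow> (complex ^ 'n) set)
      \<Rightarrow> ('a \<times> (complex ^ 'n)) topology" where
  "pullback_space B q f = subtopology (prod_topology B sphere_top)
      {(b, z). b \<in> topspace B \<and> z \<in> sphere 0 1 \<and> f b = lens_proj q z}"

end

theory Submission
  imports Defs
begin


locale qrel =
  fixes X :: "'a topology" and r :: "'a \<Rightarrow> 'a \<Rightarrow> bool"
  assumes rrefl: "x \<in> topspace X \<Longrightarrow> r x x"
    and rsym: "r x y \<Longrightarrow> r y x"
    and rtrans: "r x y \<Longrightarrow> r y z \<Longrightarrow> r x z"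
begin

lemma qclass_self: "x \<in> topspace X \<Longrightarrow> x \<in> qclass X r x"
  by (simp add: qclass_def rrefl)

lemma qclass_eq: "y \<in> qclass X r x \<Longrightarrow> qclass X r y = qclass X r x"
  unfolding qclass_def using rsym rtrans by blast

lemma qclass_eq_iff: "x \<in> topspace X \<Longrightarrow> y \<in> topspace X \<Longrightarrow> qclass X r x = qclass X r y \<longleftrightarrow> r x y"
  unfolding qclass_def using rsym rtrans rrefl by blast

lemma qclass_sub: "qclass X r x \<subseteq> topspace X"
  unfolding qclass_def by auto

lemma istop: "istopology (\<lambda>V. V \<subseteq> qclasses X r \<and> openin X (\<Union>V))"
  unfolding istopology_def
proof (rule conjI; intro allI impI)
  fix S T assume S: "S \<subseteq> qclasses X r \<and> openin X (\<Union>S)" and T: "T \<subseteq> qclasses X r \<and> openin X (\<Union>T)"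
  have "\<Union>(S \<inter> T) = \<Union>S \<inter> \<Union>T"
  proof
    show "\<Union>S \<inter> \<Union>T \<subseteq> \<Union>(S \<inter> T)"
    proof
      fix x assume "x \<in> \<Union>S \<inter> \<Union>T"
      then obtain A C where A: "A \<in> S" "x \<in> A" and C: "C \<in> T" "x \<in> C" by auto
      from A S obtain a where a: "A = qclass X r a" by (auto simp: qclasses_def)
      from C T obtain c where c: "C = qclass X r c" by (auto simp: qclasses_def)
      have "A = C" using qclass_eq[of x a] qclass_eq[of x c] a c A C by simp
      then show "x \<in> \<Union>(S \<inter> T)" using A C by auto
    qed
  qed auto
  then show "S \<inter> T \<subseteq> qclasses X r \<and> openin X (\<Union>(S \<inter> T))" using S T by (simp add: openin_Int le_infI1)
next
  fix K assume K: "\<forall>V\<in>K. V \<subseteq> qclasses X r \<and> openin X (\<Union>V)"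
  have "\<Union>(\<Union>K) = \<Union>(Union ` K)" by auto
  then show "\<Union>K \<subseteq> qclasses X r \<and> openin X (\<Union>(\<Union>K))" using K by auto
qed

lemma openin_q: "openin (quotient_top X r) V \<longleftrightarrow> V \<subseteq> qclasses X r \<and> openin X (\<Union>V)"
  unfolding quotient_top_def using istop by simp

lemma union_qclasses: "\<Union>(qclasses X r) = topspace X"
  unfolding qclasses_def using qclass_sub qclass_self by blast

lemma topspace_q: "topspace (quotient_top X r) = qclasses X r"
proof -
  have "openin (quotient_top X r) (qclasses X r)"
    by (simp add: openin_q union_qclasses)
  moreover have "\<And>V. openin (quotient_top X r) V \<Longrightarrow> V \<subseteq> qclasses X r" by (simp add: openin_q)
  ultimately show ?thesis unfolding topspace_def by blast
qed

lemma cont_qclass: "continuous_map X (quotient_top X r) (qclass X r)"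
  unfolding continuous_map_def
proof (intro conjI allI impI)
  show "qclass X r \<in> topspace X \<rightarrow> topspace (quotient_top X r)"
    by (auto simp: topspace_q qclasses_def)
  fix V assume "openin (quotient_top X r) V"
  then have V: "V \<subseteq> qclasses X r" "openin X (\<Union>V)" by (auto simp: openin_q)
  have "{x \<in> topspace X. qclass X r x \<in> V} = \<Union>V"
  proof
    show "\<Union>V \<subseteq> {x \<in> topspace X. qclass X r x \<in> V}"
    proof
      fix x assume "x \<in> \<Union>V"
      then obtain A where A: "A \<in> V" "x \<in> A" by auto
      then obtain a where a: "A = qclass X r a" using V by (auto simp: qclasses_def)
      then have "qclass X r x = A" using A qclass_eq by metis
      then show "x \<in> {x \<in> topspace X. qclass X r x \<in> V}" using A a qclass_sub by auto
    qed
  qed (use qclass_self in auto)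
  then show "openin X {x \<in> topspace X. qclass X r x \<in> V}" using V by simp
qed

lemma cont_from_q:
  assumes "continuous_map X Y (\<lambda>x. g (qclass X r x))"
  shows "continuous_map (quotient_top X r) Y g"
  unfolding continuous_map_def
proof (intro conjI allI impI)
  show "g \<in> topspace (quotient_top X r) \<rightarrow> topspace Y"
    using assms by (auto simp: topspace_q qclasses_def continuous_map_def)
  fix W assume W: "openin Y W"
  let ?V = "{c \<in> topspace (quotient_top X r). g c \<in> W}"
  have "\<Union>?V = {x \<in> topspace X. g (qclass X r x) \<in> W}"
  proof
    show "\<Union>?V \<subseteq> {x \<in> topspace X. g (qclass X r x) \<in> W}"
    proof
      fix x assume "x \<in> \<Union>?V"
      then obtain A where A: "A \<in> ?V" "x \<in> A" by auto
      then obtain a where a: "A = qclass X r a" by (auto simp: topspace_q qclasses_def)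
      then have "qclass X r x = A" using A qclass_eq by metis
      then show "x \<in> {x \<in> topspace X. g (qclass X r x) \<in> W}" using A a qclass_sub by auto
    qed
  next
    show "{x \<in> topspace X. g (qclass X r x) \<in> W} \<subseteq> \<Union>?V"
      using qclass_self by (force simp: topspace_q qclasses_def)
  qed
  moreover have "openin X {x \<in> topspace X. g (qclass X r x) \<in> W}"
    using assms W by (simp add: continuous_map_def)
  ultimately show "openin (quotient_top X r) ?V"
    by (simp add: openin_q topspace_q)
qed

end



lemma zeta_pow: "zeta q ^ g = exp (of_nat g * (2 * of_real pi * \<i> / of_nat q))"
  unfolding zeta_def by (simp only: exp_of_nat_mult)

lemma zeta_q: "q > 0 \<Longrightarrow> zeta q ^ q = 1"
proof -
  assume q: "q > 0"
  have "of_nat q * (2 * of_real pi * \<i> / of_nat q) = 2 * of_real pi * \<i>" using q by simp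
  then show ?thesis by (simp add: zeta_pow)
qed

lemma zeta_mod: "q > 0 \<Longrightarrow> zeta q ^ (a mod q) = zeta q ^ a"
proof -
  assume q: "q > 0"
  have "zeta q ^ a = zeta q ^ (q * (a div q) + a mod q)" by simp
  also have "\<dots> = (zeta q ^ q) ^ (a div q) * zeta q ^ (a mod q)" by (simp only: power_add power_mult)
  finally show ?thesis using zeta_q[OF q] by simp
qed

lemma norm_zeta: "norm (zeta q ^ g) = 1"
  unfolding zeta_def by (simp add: norm_power)

lemma zeta_nz: "zeta q ^ g \<noteq> 0"
  using norm_zeta[of q g] by (metis norm_zero zero_neq_one)

lemma zeta_one: assumes "0 < d" "d < q" shows "zeta q ^ d \<noteq> 1"
proof
  assume "zeta q ^ d = 1"
  then have "exp (of_nat d * (2 * of_real pi * \<i> / of_nat q)) = 1" by (simp add: zeta_pow)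
  then obtain n :: int where n: "Im (of_nat d * (2 * of_real pi * \<i> / of_nat q)) = of_int (2 * n) * pi"
    by (auto simp: exp_eq_1)
  have "Im (of_nat d * (2 * of_real pi * \<i> / of_nat q)) = 2 * pi * real d / real q"
    using assms by (simp add: Im_divide power2_eq_square)
  with n have "2 * pi * real d / real q = 2 * pi * of_int n" by (simp add: mult_ac)
  then have "pi * (real d / real q) = pi * of_int n" by simp
  then have "real d / real q = of_int n" using pi_gt_zero by (metis mult_left_cancel pi_neq_zero)
  moreover have "0 < real d / real q" "real d / real q < 1" using assms by auto
  ultimately have "0 < n" "n < 1" by simp_all
  then show False by simp
qed

lemma zeta_inj: assumes "a < q" "b < q" "zeta q ^ a = zeta q ^ b" shows "a = b"
proof (rule ccontr)
  assume ne: "a \<noteq> b"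
  have gen: "\<And>a b. a < b \<Longrightarrow> b < q \<Longrightarrow> zeta q ^ a = zeta q ^ b \<Longrightarrow> False"
  proof -
    fix a b assume ab: "a < b" "b < q" "zeta q ^ a = zeta q ^ b"
    have "zeta q ^ b = zeta q ^ a * zeta q ^ (b - a)" using ab by (metis power_add le_add_diff_inverse less_imp_le)
    with ab have "zeta q ^ a * zeta q ^ (b - a) = zeta q ^ a * 1" by simp
    then have "zeta q ^ (b - a) = 1" using zeta_nz[of q a] by (metis mult_left_cancel)
    then show False using zeta_one[of "b - a" q] ab by simp
  qed
  show False using ne assms gen[of a b] gen[of b a] by (metis linorder_neqE_nat)
qed



lemma zeta_mult: "q > 0 \<Longrightarrow> zeta q ^ a * zeta q ^ b = zeta q ^ ((a + b) mod q)"
  by (simp add: zeta_mod power_add)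

lemma norm_smult_vec: "norm (c *s (v :: complex ^ 'n)) = norm c * norm v"
  unfolding norm_vec_def by (simp add: norm_mult L2_set_right_distrib)

lemma norm_zact: "norm (zact q v g) = norm (v :: complex ^ 'n)"
  by (simp add: zact_def norm_smult_vec norm_zeta)

lemma lens_qrel: assumes q: "q > 0" shows "qrel (sphere_top :: (complex ^ 'n) topology) (lens_rel q)"
proof
  fix x :: "complex ^ 'n"
  show "lens_rel q x x" unfolding lens_rel_def zact_def using q by (intro exI[of _ 0]) simp
next
  fix x y :: "complex ^ 'n" assume "lens_rel q x y"
  then obtain g where g: "g < q" "y = zeta q ^ g *s x" by (auto simp: lens_rel_def zact_def)
  have "zeta q ^ ((q - g) mod q) * zeta q ^ g = 1"
    using q g by (simp add: zeta_mult mod_add_left_eq)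
  then have "x = zeta q ^ ((q - g) mod q) *s y" using g by (simp add: vector_smult_assoc)
  then show "lens_rel q y x" unfolding lens_rel_def zact_def using q by (intro exI[of _ "(q - g) mod q"]) simp
next
  fix x y z :: "complex ^ 'n" assume "lens_rel q x y" "lens_rel q y z"
  then obtain g h where g: "g < q" "y = zeta q ^ g *s x" and h: "h < q" "z = zeta q ^ h *s y"
    by (auto simp: lens_rel_def zact_def)
  then have "z = zeta q ^ ((h + g) mod q) *s x" using q by (simp add: vector_smult_assoc zeta_mult)
  then show "lens_rel q x z" unfolding lens_rel_def zact_def using q by (intro exI[of _ "(h + g) mod q"]) simp
qed

lemma topspace_sphere: "topspace sphere_top = sphere 0 1"
  by (simp add: sphere_top_def)

locale setting =
  fixes B :: "'a topology" and U :: "'n::finite \<Rightarrow> 'a set"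
    and \<phi> :: "'n \<Rightarrow> 'a \<Rightarrow> real" and q :: nat and \<eta> :: "'n \<Rightarrow> 'n \<Rightarrow> nat"
  assumes q: "q > 0"
    and oc: "open_cover B U"
    and pou: "pou_dominated B U \<phi>"
    and coc: "cocycle q U \<eta>"
begin

abbreviation "fv \<equiv> f_vec q U \<phi> \<eta>"

lemma U_sub: "U j \<subseteq> topspace B"
  using oc by (simp add: open_cover_def openin_subset)

lemma U_open: "openin B (U j)"
  using oc by (simp add: open_cover_def)

lemma U_cover: "b \<in> topspace B \<Longrightarrow> \<exists>j. b \<in> U j"
  using oc by (auto simp: open_cover_def)

lemma phi_zero: "b \<in> topspace B \<Longrightarrow> b \<notin> U k \<Longrightarrow> \<phi> k b = 0"
  using pou by (simp add: pou_dominated_def)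

lemma phi_nonneg: "b \<in> topspace B \<Longrightarrow> 0 \<le> \<phi> k b"
  using pou by (simp add: pou_dominated_def)

lemma phi_sum: "b \<in> topspace B \<Longrightarrow> (\<Sum>k\<in>UNIV. \<phi> k b) = 1"
  using pou by (simp add: pou_dominated_def)

lemma phi_cont: "continuous_map B euclideanreal (\<phi> k)"
  using pou by (simp add: pou_dominated_def)

lemma fv_rel: assumes b: "b \<in> U j" "b \<in> U k"
  shows "fv j b = zeta q ^ (\<eta> j k) *s fv k b"
proof (subst vec_eq_iff, intro allI)
  fix l
  have bB: "b \<in> topspace B" using b U_sub by auto
  show "fv j b $ l = (zeta q ^ \<eta> j k *s fv k b) $ l"
  proof (cases "b \<in> U l")
    case False
    then show ?thesis using phi_zero[OF bB False] by (simp add: f_vec_def)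
  next
    case True
    then have ne: "U j \<inter> U l \<noteq> {}" "U k \<inter> U l \<noteq> {}" "U j \<inter> U k \<inter> U l \<noteq> {}" using b by auto
    have "(\<eta> j k + \<eta> k l) mod q = \<eta> j l" using coc ne(3) by (simp add: cocycle_def)
    then have "zeta q ^ \<eta> j l = zeta q ^ \<eta> j k * zeta q ^ \<eta> k l"
      using zeta_mult[OF q] by metis
    then show ?thesis using ne by (simp add: f_vec_def)
  qed
qed

lemma fv_comp_norm: assumes b: "b \<in> U j" shows "norm (fv j b $ k) ^ 2 = \<phi> k b"
proof -
  have bB: "b \<in> topspace B" using b U_sub by auto
  show ?thesis
  proof (cases "U j \<inter> U k = {}")
    case True
    then have "b \<notin> U k" using b by auto
    then show ?thesis using True phi_zero[OF bB] by (simp add: f_vec_def)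
  next
    case False
    then show ?thesis using phi_nonneg[OF bB, of k] by (simp add: f_vec_def norm_mult norm_zeta)
  qed
qed

lemma fv_normsq: "b \<in> U j \<Longrightarrow> (\<Sum>k\<in>UNIV. norm (fv j b $ k) ^ 2) = 1"
  using fv_comp_norm phi_sum U_sub by (simp add: subset_iff)

lemma fv_sphere: "b \<in> U j \<Longrightarrow> fv j b \<in> sphere 0 1"
  by (simp add: norm_vec_def L2_set_def fv_normsq)

lemma part1: assumes b: "b \<in> U j" "b \<in> U k"
  shows "lens_proj q (fv j b) = lens_proj q (fv k b)"
proof -
  interpret L: qrel sphere_top "lens_rel q" by (rule lens_qrel[OF q])
  have "lens_rel q (fv k b) (fv j b)"
    unfolding lens_rel_def zact_def
    using fv_rel[OF b] coc b by (intro exI[of _ "\<eta> j k"]) (auto simp: cocycle_def)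
  then have "lens_rel q (fv j b) (fv k b)" by (rule L.rsym)
  then show ?thesis unfolding lens_proj_def
    using L.qclass_eq_iff[of "fv j b" "fv k b"] fv_sphere b by (simp add: topspace_sphere)
qed

end


lemma cm_vec: "(\<And>i. continuous_map X euclidean (\<lambda>x. f x i)) \<Longrightarrow> continuous_map X euclidean (\<lambda>x. (\<chi> i. f x i) :: 'b::real_normed_vector ^ 'n)"
  by (simp add: continuous_map_atin tendsto_vec_lambda)

lemma cm_nth: "continuous_map X euclidean f \<Longrightarrow> continuous_map X euclidean (\<lambda>x. (f x :: 'b::real_normed_vector ^ 'n) $ i)"
  by (simp add: continuous_map_atin tendsto_vec_nth)

lemma cm_mult: "continuous_map X euclidean f \<Longrightarrow> continuous_map X euclidean g \<Longrightarrow> continuous_map X euclidean (\<lambda>x. f x * g x :: 'b::real_normed_algebra)"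
  by (simp add: continuous_map_atin tendsto_mult)

lemma cm_cnj: "continuous_map X euclidean f \<Longrightarrow> continuous_map X euclidean (\<lambda>x. cnj (f x))"
  by (simp add: continuous_map_atin tendsto_cnj)

lemma cm_sqrt: "continuous_map X euclideanreal f \<Longrightarrow> continuous_map X euclidean (\<lambda>x. complex_of_real (sqrt (f x)))"
  by (simp add: continuous_map_atin tendsto_of_real tendsto_real_sqrt)

lemma cm_smult: assumes "continuous_map X euclidean f"
  shows "continuous_map X euclidean (\<lambda>x. (c::complex) *s (f x :: complex ^ 'n))"
proof -
  have "continuous_map X euclidean (\<lambda>x. (\<chi> i. c * f x $ i) :: complex ^ 'n)"
    by (intro cm_vec cm_mult cm_nth assms) simp
  moreover have "(\<lambda>x. (\<chi> i. c * f x $ i)) = (\<lambda>x. c *s f x)" by (rule ext) (simp add: vec_eq_iff)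
  ultimately show ?thesis by simp
qed

context setting begin

lemma fv_cont: "continuous_map B euclidean (fv j)"
proof -
  have "continuous_map B euclidean (\<lambda>b. (\<chi> k. if U j \<inter> U k = {} then 0
        else complex_of_real (sqrt (\<phi> k b)) * zeta q ^ (\<eta> j k)) :: complex ^ 'n)"
  proof (rule cm_vec)
    fix k
    show "continuous_map B euclidean (\<lambda>b. if U j \<inter> U k = {} then 0
        else complex_of_real (sqrt (\<phi> k b)) * zeta q ^ (\<eta> j k))"
      by (cases "U j \<inter> U k = {}") (simp_all add: cm_mult cm_sqrt phi_cont)
  qed
  then show ?thesis unfolding f_vec_def .
qed

lemma fv_cont_sphere: "continuous_map (subtopology B (U j)) sphere_top (fv j)"
  unfolding sphere_top_def continuous_map_in_subtopology
  using continuous_map_from_subtopology[OF fv_cont] fv_sphere U_sub by auto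

lemma class_map_eq: "b \<in> U j \<Longrightarrow> class_map q U \<phi> \<eta> b = lens_proj q (fv j b)"
  unfolding class_map_def by (metis (mono_tags, lifting) part1 someI_ex)

lemma lens_proj_eq: "lens_proj q = qclass sphere_top (lens_rel q)"
  by (simp add: lens_proj_def fun_eq_iff)

lemma part3: "continuous_map B (lens_space q) (class_map q U \<phi> \<eta>)"
proof -
  interpret L: qrel sphere_top "lens_rel q" by (rule lens_qrel[OF q])
  show ?thesis
  proof (rule pasting_lemma[where I=UNIV and T=U and f="\<lambda>j b. lens_proj q (fv j b)"])
    fix j :: 'n
    show "openin B (U j)" by (rule U_open)
    show "continuous_map (subtopology B (U j)) (lens_space q) (\<lambda>b. lens_proj q (fv j b))"
      unfolding lens_space_def lens_proj_eq
      using continuous_map_compose[OF fv_cont_sphere L.cont_qclass] by (simp add: o_def)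
  next
    fix i j x assume "x \<in> topspace B \<inter> U i \<inter> U j"
    then show "lens_proj q (fv i x) = lens_proj q (fv j x)" using part1 by auto
  next
    fix x assume "x \<in> topspace B"
    then obtain j where "x \<in> U j" using U_cover by auto
    then show "\<exists>j. j \<in> UNIV \<and> x \<in> U j \<and> class_map q U \<phi> \<eta> x = lens_proj q (fv j x)"
      using class_map_eq by auto
  qed
qed

end


context setting begin

abbreviation "Ppre \<equiv> P_pre B U q"
abbreviation "Prel \<equiv> equivclp (P_gen U q \<eta>)"
abbreviation "PB \<equiv> pullback_space B q (class_map q U \<phi> \<eta>)"

definition "H x = (fst x, zeta q ^ snd (snd x) *s fv (fst (snd x)) (fst x))"
definition "hmap c = H (SOME x. x \<in> c)"
definition "w j y = (\<Sum>k\<in>UNIV. snd y $ k * cnj (fv j (fst y) $ k))"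
definition "dl v = (THE m. m < q \<and> zeta q ^ m = v)"
definition "Gj j y = qclass Ppre Prel (fst y, j, dl (w j y))"
definition "G y = Gj (SOME j. fst y \<in> U j) y"

lemma P_qrel: "qrel Ppre Prel"
proof
  show "\<And>x. Prel x x" by simp
  show "\<And>x y. Prel x y \<Longrightarrow> Prel y x" by (rule equivclp_sym)
  show "\<And>x y z. Prel x y \<Longrightarrow> Prel y z \<Longrightarrow> Prel x z" by (rule equivclp_trans)
qed

sublocale P: qrel Ppre Prel by (rule P_qrel)

lemma topspace_Ppre: "topspace Ppre = {(b, j, g). b \<in> topspace B \<and> b \<in> U j \<and> g < q}"
  by (auto simp: P_pre_def)

lemma topspace_PB: "topspace PB = {(b, z). b \<in> topspace B \<and> z \<in> sphere 0 1 \<and> class_map q U \<phi> \<eta> b = lens_proj q z}"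
  by (auto simp: pullback_space_def sphere_top_def)

lemma H_gen: assumes "P_gen U q \<eta> x y" shows "H x = H y"
proof -
  obtain b j k g where x: "x = (b, j, g)" and y: "y = (b, k, (g + \<eta> j k) mod q)" and b: "b \<in> U j" "b \<in> U k" "g < q"
    using assms by (auto simp: P_gen_def)
  have "zeta q ^ ((g + \<eta> j k) mod q) *s fv k b = zeta q ^ g *s (zeta q ^ \<eta> j k *s fv k b)"
    by (simp add: vector_smult_assoc zeta_mult[OF q])
  also have "\<dots> = zeta q ^ g *s fv j b" using fv_rel[OF b(1,2)] by simp
  finally show ?thesis by (simp add: H_def x y)
qed

lemma H_equiv: assumes "Prel x y" shows "H x = H y"
  using assms
proof (induction rule: equivclp_induct)
  case base
  then show ?case by simp
next
  case (step y z)
  then show ?case using H_gen by metis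
qed

lemma hmap_class: assumes "x \<in> topspace Ppre" shows "hmap (qclass Ppre Prel x) = H x"
proof -
  have "x \<in> qclass Ppre Prel x" using P.qclass_self assms .
  then have ex: "\<exists>y. y \<in> qclass Ppre Prel x" by blast
  have "\<And>y. y \<in> qclass Ppre Prel x \<Longrightarrow> H y = H x"
    by (simp add: qclass_def) (metis H_equiv)
  then show ?thesis unfolding hmap_def using someI_ex[OF ex] by blast
qed

lemma fst_H: "fst (H x) = fst x" by (simp add: H_def)

lemma P_proj_class: assumes "x \<in> topspace Ppre" shows "P_proj (qclass Ppre Prel x) = fst x"
proof -
  have mem: "x \<in> qclass Ppre Prel x" using P.qclass_self assms .
  have all: "\<And>b j g. (b, j, g) \<in> qclass Ppre Prel x \<Longrightarrow> b = fst x"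
  proof -
    fix b j g assume "(b, j, g) \<in> qclass Ppre Prel x"
    then have "Prel x (b, j, g)" by (simp add: qclass_def)
    from H_equiv[OF this] show "b = fst x" by (metis fst_H fst_conv)
  qed
  obtain j g where "(fst x, j, g) \<in> qclass Ppre Prel x" using mem by (metis prod.collapse)
  then have "\<exists>j g. (fst x, j, g) \<in> qclass Ppre Prel x" by blast
  then show ?thesis unfolding P_proj_def using all by (intro some_equality) blast+
qed

end


context setting begin

lemma lens_proj_smult: assumes "v \<in> sphere 0 1" "g < q"
  shows "lens_proj q (zeta q ^ g *s v) = lens_proj q v"
proof -
  interpret L: qrel sphere_top "lens_rel q" by (rule lens_qrel[OF q])
  have "lens_rel q v (zeta q ^ g *s v)" unfolding lens_rel_def zact_def using assms by blast
  moreover have "zeta q ^ g *s v \<in> sphere 0 1" using assms by (simp add: norm_smult_vec norm_zeta)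
  ultimately show ?thesis unfolding lens_proj_def
    using L.qclass_eq_iff[of v "zeta q ^ g *s v"] assms L.rsym by (metis topspace_sphere)
qed

lemma H_in_PB: assumes "x \<in> topspace Ppre" shows "H x \<in> topspace PB"
proof -
  obtain b j g where x: "x = (b, j, g)" and b: "b \<in> topspace B" "b \<in> U j" "g < q"
    using assms by (auto simp: topspace_Ppre)
  have "class_map q U \<phi> \<eta> b = lens_proj q (zeta q ^ g *s fv j b)"
    using class_map_eq[OF b(2)] lens_proj_smult[OF fv_sphere[OF b(2)] b(3)] by simp
  moreover have "zeta q ^ g *s fv j b \<in> sphere 0 1" using fv_sphere[OF b(2)] by (simp add: norm_smult_vec norm_zeta)
  ultimately show ?thesis using b by (simp add: topspace_PB H_def x)
qed

lemma H_cont: "continuous_map Ppre PB H"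
proof -
  have c2: "continuous_map Ppre euclidean (\<lambda>x. snd (H x))"
  proof (rule pasting_lemma[where I=UNIV and T="\<lambda>i. {x \<in> topspace Ppre. snd x = i}"
        and f="\<lambda>i x. zeta q ^ snd i *s fv (fst i) (fst x)"])
    fix i :: "'n \<times> nat"
    have o: "openin (prod_topology (discrete_topology UNIV) (discrete_topology UNIV)) ({fst i} \<times> {snd i})"
      by (simp only: openin_prod_Times_iff) simp
    have "openin (prod_topology B (prod_topology (discrete_topology UNIV) (discrete_topology UNIV)))
            (topspace B \<times> ({fst i} \<times> {snd i}))"
      using o by (simp only: openin_prod_Times_iff) simp
    then have "openin Ppre ((topspace B \<times> ({fst i} \<times> {snd i})) \<inter> {(b, j, g). b \<in> U j \<and> g < q})"
      unfolding P_pre_def by (rule openin_subtopology_Int)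
    moreover have "(topspace B \<times> ({fst i} \<times> {snd i})) \<inter> {(b, j, g). b \<in> U j \<and> g < q}
        = {x \<in> topspace Ppre. snd x = i}"
      by (auto simp: topspace_Ppre)
    ultimately show "openin Ppre {x \<in> topspace Ppre. snd x = i}" by simp
    have "continuous_map Ppre B fst"
      unfolding P_pre_def by (intro continuous_map_from_subtopology continuous_map_fst)
    then have "continuous_map Ppre euclidean (\<lambda>x. fv (fst i) (fst x))"
      using continuous_map_compose[OF _ fv_cont] by (simp add: o_def)
    then show "continuous_map (subtopology Ppre {x \<in> topspace Ppre. snd x = i}) euclidean
        (\<lambda>x. zeta q ^ snd i *s fv (fst i) (fst x))"
      by (intro continuous_map_from_subtopology cm_smult)
  next
    fix i j x assume "x \<in> topspace Ppre \<inter> {x \<in> topspace Ppre. snd x = i} \<inter> {x \<in> topspace Ppre. snd x = j}"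
    then show "zeta q ^ snd i *s fv (fst i) (fst x) = zeta q ^ snd j *s fv (fst j) (fst x)" by auto
  next
    fix x assume "x \<in> topspace Ppre"
    then show "\<exists>j. j \<in> UNIV \<and> x \<in> {x \<in> topspace Ppre. snd x = j} \<and> snd (H x) = zeta q ^ snd j *s fv (fst j) (fst x)"
      by (auto simp: H_def)
  qed
  have c1: "continuous_map Ppre B (\<lambda>x. fst (H x))"
    unfolding fst_H P_pre_def by (intro continuous_map_from_subtopology continuous_map_fst)
  have "continuous_map Ppre sphere_top (\<lambda>x. snd (H x))"
    unfolding sphere_top_def continuous_map_in_subtopology using c2 H_in_PB
    by (force simp: topspace_PB)
  then have "continuous_map Ppre (prod_topology B sphere_top) (\<lambda>x. (fst (H x), snd (H x)))"
    using c1 by (simp only: continuous_map_paired)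
  then have "continuous_map Ppre (prod_topology B sphere_top) H" by simp
  then show ?thesis unfolding pullback_space_def continuous_map_in_subtopology
    using H_in_PB by (auto simp: topspace_PB)
qed

lemma hmap_cont: "continuous_map (P_space B U q \<eta>) PB hmap"
  unfolding P_space_def
proof (rule P.cont_from_q)
  show "continuous_map Ppre PB (\<lambda>x. hmap (qclass Ppre Prel x))"
    using H_cont by (rule continuous_map_eq) (simp add: hmap_class)
qed

end


context setting begin

lemma w_val: assumes "b \<in> U j" shows "w j (b, zeta q ^ m *s fv j b) = zeta q ^ m"
proof -
  have "w j (b, zeta q ^ m *s fv j b) = (\<Sum>k\<in>UNIV. zeta q ^ m * (fv j b $ k * cnj (fv j b $ k)))"
    by (simp add: w_def mult_ac)
  also have "\<dots> = zeta q ^ m * (\<Sum>k\<in>UNIV. complex_of_real (norm (fv j b $ k) ^ 2))"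
    unfolding sum_distrib_left complex_norm_square ..
  also have "\<dots> = zeta q ^ m * complex_of_real (\<Sum>k\<in>UNIV. norm (fv j b $ k) ^ 2)"
    by (simp only: of_real_sum)
  also have "\<dots> = zeta q ^ m" using fv_normsq[OF assms] by simp
  finally show ?thesis .
qed

lemma dl_val: "m < q \<Longrightarrow> dl (zeta q ^ m) = m"
  unfolding dl_def by (rule the_equality) (auto intro: zeta_inj)

lemma PB_decomp: assumes y: "y \<in> topspace PB" "fst y \<in> U j"
  shows "\<exists>m<q. snd y = zeta q ^ m *s fv j (fst y)"
proof -
  interpret L: qrel sphere_top "lens_rel q" by (rule lens_qrel[OF q])
  obtain b z where yz: "y = (b, z)" by fastforce
  have z: "z \<in> sphere 0 1" "class_map q U \<phi> \<eta> b = lens_proj q z" using y by (auto simp: topspace_PB yz)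
  have b: "b \<in> U j" using y yz by simp
  have "lens_proj q (fv j b) = lens_proj q z" using z class_map_eq[OF b] by simp
  then have "lens_rel q (fv j b) z" unfolding lens_proj_def
    using L.qclass_eq_iff[of "fv j b" z] fv_sphere[OF b] z by (simp add: topspace_sphere)
  then show ?thesis by (auto simp: lens_rel_def zact_def yz)
qed

lemma Gj_val: assumes "b \<in> U j" "m < q" shows "Gj j (b, zeta q ^ m *s fv j b) = qclass Ppre Prel (b, j, m)"
  using assms by (simp add: Gj_def w_val dl_val)

lemma GH: assumes x: "x \<in> topspace Ppre" and j: "fst x \<in> U j" shows "Gj j (H x) = qclass Ppre Prel x"
proof -
  obtain b k g where xx: "x = (b, k, g)" and b: "b \<in> topspace B" "b \<in> U k" "g < q"
    using x by (auto simp: topspace_Ppre)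
  have bj: "b \<in> U j" using j xx by simp
  have "H x = (b, zeta q ^ g *s (zeta q ^ \<eta> k j *s fv j b))" using fv_rel[OF b(2) bj] by (simp add: H_def xx)
  also have "\<dots> = (b, zeta q ^ ((g + \<eta> k j) mod q) *s fv j b)" by (simp add: vector_smult_assoc zeta_mult[OF q])
  finally have Hx: "H x = (b, zeta q ^ ((g + \<eta> k j) mod q) *s fv j b)" .
  have "Gj j (H x) = qclass Ppre Prel (b, j, (g + \<eta> k j) mod q)"
    unfolding Hx using bj q by (simp add: Gj_val)
  moreover have "P_gen U q \<eta> x (b, j, (g + \<eta> k j) mod q)"
    unfolding P_gen_def xx using b bj by blast
  then have "Prel x (b, j, (g + \<eta> k j) mod q)" by (rule r_into_equivclp)
  moreover have "(b, j, (g + \<eta> k j) mod q) \<in> topspace Ppre" using b bj q by (simp add: topspace_Ppre)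
  ultimately show ?thesis using P.qclass_eq_iff x by metis
qed

lemma HG: assumes y: "y \<in> topspace PB" "fst y \<in> U j"
  shows "\<exists>x\<in>topspace Ppre. Gj j y = qclass Ppre Prel x \<and> H x = y"
proof -
  obtain m where m: "m < q" "snd y = zeta q ^ m *s fv j (fst y)" using PB_decomp[OF y] by blast
  have yy: "y = (fst y, zeta q ^ m *s fv j (fst y))" using m by (metis prod.collapse)
  have "fst y \<in> topspace B" using y by (auto simp: topspace_PB)
  then have "(fst y, j, m) \<in> topspace Ppre" using y m by (simp add: topspace_Ppre)
  moreover have "Gj j y = qclass Ppre Prel (fst y, j, m)" using Gj_val[OF y(2) m(1)] yy by metis
  moreover have "H (fst y, j, m) = y" using yy by (simp add: H_def)
  ultimately show ?thesis by blast
qed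

end


context setting begin

lemma fst_cont_PB: "continuous_map PB B fst"
  unfolding pullback_space_def by (intro continuous_map_from_subtopology continuous_map_fst)

lemma snd_cont_PB: "continuous_map PB euclidean snd"
proof -
  have "continuous_map PB sphere_top snd"
    unfolding pullback_space_def by (intro continuous_map_from_subtopology continuous_map_snd)
  then show ?thesis unfolding sphere_top_def by (rule continuous_map_into_fulltopology)
qed

lemma w_cont: "continuous_map PB euclidean (w j)"
proof -
  have "continuous_map PB euclidean (\<lambda>y. \<Sum>k\<in>UNIV. snd y $ k * cnj (fv j (fst y) $ k))"
  proof (intro continuous_map_sum cm_mult cm_cnj cm_nth snd_cont_PB)
    show "finite (UNIV :: 'n set)" by simp
    fix k
    show "continuous_map PB euclidean (\<lambda>x. fv j (fst x))"
      using continuous_map_compose[OF fst_cont_PB fv_cont] by (simp add: o_def)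
  qed
  then show ?thesis unfolding w_def[abs_def] .
qed

lemma Gj_cont: "continuous_map (subtopology PB {y \<in> topspace PB. fst y \<in> U j}) (P_space B U q \<eta>) (Gj j)"
proof -
  define T where "T = {y \<in> topspace PB. fst y \<in> U j}"
  define R where "R = (\<lambda>m. zeta q ^ m) ` {..<q}"
  have wR: "\<And>y. y \<in> topspace (subtopology PB T) \<Longrightarrow> \<exists>m<q. w j y = zeta q ^ m \<and> dl (w j y) = m"
  proof -
    fix y assume "y \<in> topspace (subtopology PB T)"
    then have y: "y \<in> topspace PB" "fst y \<in> U j" by (auto simp: T_def)
    obtain m where m: "m < q" "snd y = zeta q ^ m *s fv j (fst y)" using PB_decomp[OF y] by blast
    have "w j y = zeta q ^ m" using w_val[OF y(2), of m] m by (metis prod.collapse)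
    then show "\<exists>m<q. w j y = zeta q ^ m \<and> dl (w j y) = m" using m dl_val by auto
  qed
  have cw: "continuous_map (subtopology PB T) (subtopology euclidean R) (w j)"
    unfolding continuous_map_in_subtopology
    using continuous_map_from_subtopology[OF w_cont] wR by (force simp: R_def)
  have "subtopology euclidean R = discrete_topology R"
    by (rule finite_t1_space_imp_discrete_topology) (auto simp: R_def t1_space_subtopology t1_space_euclidean)
  with cw have "continuous_map (subtopology PB T) (discrete_topology R) (w j)" by simp
  then have cdl: "continuous_map (subtopology PB T) (discrete_topology UNIV) (\<lambda>y. dl (w j y))"
    using continuous_map_compose[of _ "discrete_topology R" "w j" "discrete_topology UNIV" dl] by (simp add: o_def)
  have cf: "continuous_map (subtopology PB T) B fst"
    using fst_cont_PB by (rule continuous_map_from_subtopology)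
  have "continuous_map (subtopology PB T)
      (prod_topology B (prod_topology (discrete_topology UNIV) (discrete_topology UNIV))) (\<lambda>y. (fst y, j, dl (w j y)))"
    using cf cdl by (simp add: continuous_map_paired)
  then have "continuous_map (subtopology PB T) Ppre (\<lambda>y. (fst y, j, dl (w j y)))"
    unfolding P_pre_def continuous_map_in_subtopology using wR by (force simp: T_def)
  from continuous_map_compose[OF this P.cont_qclass]
  show ?thesis unfolding T_def[symmetric] P_space_def by (simp add: o_def Gj_def[abs_def])
qed

lemma G_cont: "continuous_map PB (P_space B U q \<eta>) G"
proof (rule pasting_lemma[where I=UNIV and T="\<lambda>j. {y \<in> topspace PB. fst y \<in> U j}" and f=Gj])
  fix j :: 'n
  show "openin PB {y \<in> topspace PB. fst y \<in> U j}"
    using openin_continuous_map_preimage[OF fst_cont_PB U_open] .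
  show "continuous_map (subtopology PB {y \<in> topspace PB. fst y \<in> U j}) (P_space B U q \<eta>) (Gj j)"
    by (rule Gj_cont)
next
  fix i k y assume y: "y \<in> topspace PB \<inter> {y \<in> topspace PB. fst y \<in> U i} \<inter> {y \<in> topspace PB. fst y \<in> U k}"
  then obtain x where x: "x \<in> topspace Ppre" "Gj k y = qclass Ppre Prel x" "H x = y"
    using HG[of y k] by auto
  have "fst x = fst y" using x(3) fst_H by metis
  then have "fst x \<in> U i" using y by simp
  from GH[OF x(1) this] show "Gj i y = Gj k y" using x by simp
next
  fix y assume y: "y \<in> topspace PB"
  then have "fst y \<in> topspace B" by (auto simp: topspace_PB)
  then have "\<exists>j. fst y \<in> U j" by (rule U_cover)
  then have "fst y \<in> U (SOME j. fst y \<in> U j)" by (rule someI_ex)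
  then show "\<exists>j. j \<in> UNIV \<and> y \<in> {y \<in> topspace PB. fst y \<in> U j} \<and> G y = Gj j y"
    using y by (auto simp: G_def)
qed

lemma topspace_P: "topspace (P_space B U q \<eta>) = qclasses Ppre Prel"
  unfolding P_space_def by (rule P.topspace_q)

lemma G_hmap: assumes "c \<in> topspace (P_space B U q \<eta>)" shows "G (hmap c) = c"
proof -
  obtain x where x: "x \<in> topspace Ppre" "c = qclass Ppre Prel x"
    using assms by (auto simp: topspace_P qclasses_def)
  have "\<exists>j. fst x \<in> U j" using x by (auto simp: topspace_Ppre)
  then have "fst x \<in> U (SOME j. fst x \<in> U j)" by (rule someI_ex)
  then have "fst x \<in> U (SOME j. fst (H x) \<in> U j)" by (simp only: fst_H)
  from GH[OF x(1) this] have "G (H x) = qclass Ppre Prel x" by (simp only: G_def)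
  then show ?thesis using x hmap_class by simp
qed

lemma hmap_G: assumes y: "y \<in> topspace PB" shows "hmap (G y) = y"
proof -
  have "fst y \<in> topspace B" using y by (auto simp: topspace_PB)
  then have "\<exists>j. fst y \<in> U j" by (rule U_cover)
  then have "fst y \<in> U (SOME j. fst y \<in> U j)" by (rule someI_ex)
  from HG[OF y this] obtain x where "x \<in> topspace Ppre" "G y = qclass Ppre Prel x" "H x = y"
    by (auto simp: G_def)
  then show ?thesis by (simp add: hmap_class)
qed

lemma H_shift: "H ((\<lambda>(b, j, g). (b, j, (g + m) mod q)) x) = (fst (H x), zact q (snd (H x)) m)"
proof -
  obtain b j g where x: "x = (b, j, g)" by (metis prod.collapse)
  have "zeta q ^ ((g + m) mod q) = zeta q ^ m * zeta q ^ g"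
    using zeta_mult[OF q, of m g] by (simp add: add.commute)
  then show ?thesis by (simp add: x H_def zact_def vector_smult_assoc)
qed

lemma equivariant: assumes "c \<in> topspace (P_space B U q \<eta>)"
  shows "hmap (P_act q c m) = (fst (hmap c), zact q (snd (hmap c)) m)"
proof -
  obtain x where x: "x \<in> topspace Ppre" "c = qclass Ppre Prel x"
    using assms by (auto simp: topspace_P qclasses_def)
  let ?s = "\<lambda>(b, j, g). (b, j, (g + m) mod q)"
  have ne: "\<exists>y. y \<in> ?s ` c" using x P.qclass_self by blast
  define y where "y = (SOME y. y \<in> ?s ` c)"
  have "y \<in> ?s ` c" unfolding y_def using someI_ex[OF ne] .
  then obtain x' where x': "x' \<in> c" "y = ?s x'" by blast
  have "Prel x x'" using x x' by (simp add: qclass_def)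
  then have Hx: "H x' = H x" by (rule sym[OF H_equiv])
  have "hmap (P_act q c m) = H y" unfolding hmap_def P_act_def y_def ..
  also have "\<dots> = (fst (H x'), zact q (snd (H x')) m)" using x'(2) H_shift by simp
  also have "\<dots> = (fst (H x), zact q (snd (H x)) m)" using Hx by simp
  finally show ?thesis using hmap_class[OF x(1)] x(2) by simp
qed

lemma fst_hmap: assumes "c \<in> topspace (P_space B U q \<eta>)" shows "fst (hmap c) = P_proj c"
proof -
  obtain x where x: "x \<in> topspace Ppre" "c = qclass Ppre Prel x"
    using assms by (auto simp: topspace_P qclasses_def)
  then show ?thesis using hmap_class P_proj_class fst_H by simp
qed

lemma homeo: "homeomorphic_map (P_space B U q \<eta>) PB hmap"
  by (rule homeomorphic_maps_imp_map[where g=G])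
    (simp add: homeomorphic_maps_def hmap_cont G_cont G_hmap hmap_G)

end

theorem mainTheorem2:
  fixes B :: "'a topology" and U :: "'n::finite \<Rightarrow> 'a set"
    and \<phi> :: "'n \<Rightarrow> 'a \<Rightarrow> real" and q :: nat and \<eta> :: "'n \<Rightarrow> 'n \<Rightarrow> nat"
  assumes "q > 0"
    and "open_cover B U"
    and "pou_dominated B U \<phi>"
    and "cocycle q U \<eta>"
  defines "f \<equiv> class_map q U \<phi> \<eta>"
  shows "(\<forall>j k b. b \<in> U j \<inter> U k \<longrightarrow>
            lens_proj q (f_vec q U \<phi> \<eta> j b) = lens_proj q (f_vec q U \<phi> \<eta> k b))
       \<and> (\<forall>j. \<forall>b\<in>U j. f_vec q U \<phi> \<eta> j b \<in> sphere 0 1)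
       \<and> continuous_map B (lens_space q) f
       \<and> (\<exists>h. homeomorphic_map (P_space B U q \<eta>) (pullback_space B q f) h
              \<and> (\<forall>c\<in>topspace (P_space B U q \<eta>). fst (h c) = P_proj c)
              \<and> (\<forall>c\<in>topspace (P_space B U q \<eta>). \<forall>m<q.
                    h (P_act q c m) = (fst (h c), zact q (snd (h c)) m)))"
proof -
  interpret S: setting B U \<phi> q \<eta> using assms by unfold_locales
  show ?thesis unfolding f_def
  proof (intro conjI allI impI ballI exI[of _ S.hmap])
    show "\<And>j k b. b \<in> U j \<inter> U k \<Longrightarrow> lens_proj q (f_vec q U \<phi> \<eta> j b) = lens_proj q (f_vec q U \<phi> \<eta> k b)"
      using S.part1 by blast
    show "\<And>j b. b \<in> U j \<Longrightarrow> f_vec q U \<phi> \<eta> j b \<in> sphere 0 1" by (rule S.fv_sphere)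
    show "continuous_map B (lens_space q) (class_map q U \<phi> \<eta>)" by (rule S.part3)
    show "homeomorphic_map (P_space B U q \<eta>) (pullback_space B q (class_map q U \<phi> \<eta>)) S.hmap" by (rule S.homeo)
    show "\<And>c. c \<in> topspace (P_space B U q \<eta>) \<Longrightarrow> fst (S.hmap c) = P_proj c" by (rule S.fst_hmap)
    show "\<And>c m. c \<in> topspace (P_space B U q \<eta>) \<Longrightarrow> m < q \<Longrightarrow>
       S.hmap (P_act q c m) = (fst (S.hmap c), zact q (snd (S.hmap c)) m)" by (rule S.equivariant)
  qed
qed


end
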